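(* Let $\mathcal{C}$ be a contraction indicator of order $n$. Define an assignment $Z$ on $S(n)$ by $$Z(G)=\{v\in V(G): \exists\, H\in S_2(n),\ w\in V(H)\text{ with }\ell(w)\in\mathcal{C},\ G\rightsquigarrow H,\ v\rightsquigarrow w\}.$$ Then $Z$ is a smooth extremal assignment.
   Context: $[n]=\{1,\dots,n\}$. A stable $n$-labeled tree is a finite tree with $n$ leaves labeled bijectively by $[n]$, all internal vertices of degree $\ge 3$; $V(G)$ its internal vertices; $S(n)$ the set of such trees up to label-preserving isomorphism and $S_2(n)$ those with exactly 2 internal vertices. For a vertex $w$, $\ell(w)$ is the set of labels of leaves adjacent to $w$. $G\rightsquigarrow G'$: $G'$ obtained by collapsing connected sets of internal vertices, inducing surjection $\pi:V(G)\to V(G')$; $v\rightsquigarrow w$ means $\pi(v)=w$. An extremal assignment of order $n$: rule $Z(G)\subset V(G)$ for $G\in S(n)$ with (a) $Z(G)\ne V(G)$, (b) if $G\rightsquigarrow G'$ and $\pi^{-1}(v')=\{v_1,\dots,v_k\}$ then $v'\in Z(G')\iff v_1,\dots,v_k\in Z(G)$. $Z$ is smooth if for every $G$ and $v\in Z(G)$ there exist $G'\in S_2(n)$, $v'\in Z(G')$ with $G\rightsquigarrow G'$, $v\rightsquigarrow v'$. A contraction indicator is a collection $\mathcal{C}$ of subsets of $[n]$ with (1) $2\le|B|\le n-2$ for $B\in\mathcal{C}$; (2) $B\in\mathcal{C}$, $B'\subset B$, $|B'|\ge2$ imply $B'\in\mathcal{C}$; (3) $B_1\cup B_2\ne[n]$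 for $B_1,B_2\in\mathcal{C}$. *)

theory Defs
  imports Main
begin

text \<open>Internal vertices are
  natural numbers (the set IV); IE is the (symmetric, irreflexive) set of edges
  between internal vertices, given as ordered pairs in both directions; leaf i
  (for i in {1..n}) is attached to the internal vertex att i.  Trees are
  considered concretely; isomorphisms are special cases of contractions.\<close>

record stree =
  IV :: "nat set"
  IE :: "(nat \<times> nat) set"
  att :: "nat \<Rightarrow> nat"

definition labels :: "nat \<Rightarrow> stree \<Rightarrow> nat \<Rightarrow> nat set" where
  "labels n G w = {i \<in> {1..n}. att G i = w}"

definition vdeg :: "nat \<Rightarrow> stree \<Rightarrow> nat \<Rightarrow> nat" where
  "vdeg n G v = card {w. (v, w) \<in> IE G} + card (labels n G v)"

text \<open>The internal graph is a tree: connected, and every edge is a bridge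
  (i.e. minimally connected, equivalently acyclic).\<close>
definition is_tree_graph :: "nat set \<Rightarrow> (nat \<times> nat) set \<Rightarrow> bool" where
  "is_tree_graph V E \<longleftrightarrow>
     finite V \<and> V \<noteq> {} \<and> E \<subseteq> V \<times> V \<and> sym E \<and> irrefl E \<and>
     (\<forall>x\<in>V. \<forall>y\<in>V. (x, y) \<in> E\<^sup>*) \<and>
     (\<forall>(x, y)\<in>E. (x, y) \<notin> (E - {(x, y), (y, x)})\<^sup>*)"

definition stable_tree :: "nat \<Rightarrow> stree \<Rightarrow> bool" where
  "stable_tree n G \<longleftrightarrow>
     is_tree_graph (IV G) (IE G) \<and>
     (\<forall>i\<in>{1..n}. att G i \<in> IV G) \<and>
     (\<forall>v\<in>IV G. vdeg n G v \<ge> 3)"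

definition S2 :: "nat \<Rightarrow> stree \<Rightarrow> bool" where
  "S2 n G \<longleftrightarrow> stable_tree n G \<and> card (IV G) = 2"

text \<open>G \<rightsquigarrow> G' via \<pi>: G' is obtained from G by collapsing connected sets of
  internal vertices (the fibres of \<pi>).\<close>
definition contracts :: "nat \<Rightarrow> stree \<Rightarrow> stree \<Rightarrow> (nat \<Rightarrow> nat) \<Rightarrow> bool" where
  "contracts n G G' \<pi> \<longleftrightarrow>
     stable_tree n G \<and> stable_tree n G' \<and>
     \<pi> ` IV G = IV G' \<and>
     (\<forall>i\<in>{1..n}. att G' i = \<pi> (att G i)) \<and>
     (\<forall>v' w'. (v', w') \<in> IE G' \<longleftrightarrow>
        v' \<noteq> w' \<and> (\<exists>v w. (v, w) \<in> IE G \<and> \<pi> v = v' \<and> \<pi> w = w')) \<and>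
     (\<forall>v'\<in>IV G'. \<forall>x\<in>IV G. \<forall>y\<in>IV G. \<pi> x = v' \<longrightarrow> \<pi> y = v' \<longrightarrow>
        (x, y) \<in> (IE G \<inter> {(a, b). \<pi> a = v' \<and> \<pi> b = v'})\<^sup>*)"

definition extremal_assignment :: "nat \<Rightarrow> (stree \<Rightarrow> nat set) \<Rightarrow> bool" where
  "extremal_assignment n Z \<longleftrightarrow>
     (\<forall>G. stable_tree n G \<longrightarrow> Z G \<subseteq> IV G \<and> Z G \<noteq> IV G) \<and>
     (\<forall>G G' \<pi>. contracts n G G' \<pi> \<longrightarrow>
        (\<forall>v'\<in>IV G'. v' \<in> Z G' \<longleftrightarrow> (\<forall>v\<in>IV G. \<pi> v = v' \<longrightarrow> v \<in> Z G)))"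

definition smooth :: "nat \<Rightarrow> (stree \<Rightarrow> nat set) \<Rightarrow> bool" where
  "smooth n Z \<longleftrightarrow>
     (\<forall>G. stable_tree n G \<longrightarrow> (\<forall>v\<in>Z G.
        \<exists>G' \<pi>. S2 n G' \<and> contracts n G G' \<pi> \<and> \<pi> v \<in> Z G'))"

definition contraction_indicator :: "nat \<Rightarrow> nat set set \<Rightarrow> bool" where
  "contraction_indicator n C \<longleftrightarrow>
     (\<forall>B\<in>C. B \<subseteq> {1..n} \<and> 2 \<le> card B \<and> card B + 2 \<le> n) \<and>
     (\<forall>B\<in>C. \<forall>B'. B' \<subseteq> B \<and> 2 \<le> card B' \<longrightarrow> B' \<in> C) \<and>
     (\<forall>B1\<in>C. \<forall>B2\<in>C. B1 \<union> B2 \<noteq> {1..n})"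

definition Z_of :: "nat \<Rightarrow> nat set set \<Rightarrow> stree \<Rightarrow> nat set" where
  "Z_of n C G = {v \<in> IV G. \<exists>H \<pi> w. S2 n H \<and> w \<in> IV H \<and> labels n H w \<in> C \<and>
                     contracts n G H \<pi> \<and> \<pi> v = w}"

end

theory Submission
  imports Defs
begin

definition side :: "stree \<Rightarrow> nat \<Rightarrow> nat \<Rightarrow> nat set" where
  "side G x y = {z. (x, z) \<in> (IE G - {(x, y), (y, x)})\<^sup>*}"

definition Lab :: "nat \<Rightarrow> stree \<Rightarrow> nat set \<Rightarrow> nat set" where
  "Lab n G S = {i \<in> {1..n}. att G i \<in> S}"

lemma st_facts:
  assumes "stable_tree n G"
  shows "finite (IV G)" "IV G \<noteq> {}" "IE G \<subseteq> IV G \<times> IV G" "sym (IE G)" "irrefl (IE G)"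
    "\<And>x y. x \<in> IV G \<Longrightarrow> y \<in> IV G \<Longrightarrow> (x,y) \<in> (IE G)\<^sup>*"
    "\<And>x y. (x,y) \<in> IE G \<Longrightarrow> (x,y) \<notin> (IE G - {(x,y),(y,x)})\<^sup>*"
    "\<And>i. i \<in> {1..n} \<Longrightarrow> att G i \<in> IV G"
    "\<And>v. v \<in> IV G \<Longrightarrow> vdeg n G v \<ge> 3"
  using assms unfolding stable_tree_def is_tree_graph_def by auto

lemma edgeV: "stable_tree n G \<Longrightarrow> (x,y) \<in> IE G \<Longrightarrow> x \<in> IV G \<and> y \<in> IV G"
  using st_facts(3) by blast

lemma edge_sym: "stable_tree n G \<Longrightarrow> (x,y) \<in> IE G \<Longrightarrow> (y,x) \<in> IE G"
  using st_facts(4) by (auto simp: sym_def)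

lemma edge_neq: "stable_tree n G \<Longrightarrow> (x,y) \<in> IE G \<Longrightarrow> x \<noteq> y"
  using st_facts(5) by (auto simp: irrefl_def)

lemma rtr_swap: "sym R \<Longrightarrow> (a,b) \<in> R\<^sup>* \<Longrightarrow> (b,a) \<in> R\<^sup>*"
  by (metis sym_rtrancl symD)

lemma sym_minus: "sym E \<Longrightarrow> sym (E - {(x,y),(y,x)})"
  by (auto simp: sym_def)

lemma side_x: "x \<in> side G x y" by (simp add: side_def)

lemma side_swap_def: "side G y x = {z. (y, z) \<in> (IE G - {(x, y), (y, x)})\<^sup>*}"
  by (simp add: side_def insert_commute)

lemma side_sub:
  assumes "stable_tree n G" "x \<in> IV G" shows "side G x y \<subseteq> IV G"
proof
  fix z assume "z \<in> side G x y"
  hence "(x,z) \<in> (IE G - {(x, y), (y, x)})\<^sup>*" by (simp add: side_def)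
  thus "z \<in> IV G"
    by (induction rule: rtrancl_induct) (use assms edgeV in auto)
qed

lemma side_y: "stable_tree n G \<Longrightarrow> (x,y) \<in> IE G \<Longrightarrow> y \<notin> side G x y"
  using st_facts(7) by (auto simp: side_def)

lemma side_closed: "z \<in> side G x y \<Longrightarrow> (z,w) \<in> IE G \<Longrightarrow> (z,w) \<notin> {(x,y),(y,x)} \<Longrightarrow> w \<in> side G x y"
  unfolding side_def by (auto intro: rtrancl_into_rtrancl)

lemma reach_into:
  assumes "p \<in> side G a b" "(p,q) \<in> R\<^sup>*" "R \<subseteq> IE G - {(a,b),(b,a)}"
  shows "q \<in> side G a b"
  using assms(2,1)
proof (induction rule: rtrancl_induct)
  case (step y z) thus ?case using assms(3) side_closed[of y G a b z] by auto
qed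

lemma side_union:
  assumes "stable_tree n G" "(x,y) \<in> IE G"
  shows "IV G = side G x y \<union> side G y x"
proof
  have "x \<in> IV G" "y \<in> IV G" using edgeV assms by auto
  thus "side G x y \<union> side G y x \<subseteq> IV G" using side_sub assms by blast
  show "IV G \<subseteq> side G x y \<union> side G y x"
  proof
    fix z assume "z \<in> IV G"
    hence "(x,z) \<in> (IE G)\<^sup>*" using st_facts(6)[OF assms(1)] \<open>x \<in> IV G\<close> by auto
    thus "z \<in> side G x y \<union> side G y x"
    proof (induction rule: rtrancl_induct)
      case base then show ?case by (simp add: side_x)
    next
      case (step w w')
      show ?case
      proof (cases "(w,w') \<in> {(x,y),(y,x)}")
        case True thus ?thesis using side_x[of x G y] side_x[of y G x] by auto
      next
        case False
        thus ?thesis using step side_closed[of w G x y w'] side_closed[of w G y x w'] by auto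
      qed
    qed
  qed
qed

lemma side_disj:
  assumes "stable_tree n G" "(x,y) \<in> IE G"
  shows "side G x y \<inter> side G y x = {}"
proof (rule ccontr)
  assume "side G x y \<inter> side G y x \<noteq> {}"
  then obtain z where z: "z \<in> side G x y" "z \<in> side G y x" by auto
  let ?R = "IE G - {(x,y),(y,x)}"
  have s: "sym ?R" by (rule sym_minus[OF st_facts(4)[OF assms(1)]])
  have "(x,z) \<in> ?R\<^sup>*" using z(1) unfolding side_def by simp
  have "(y,z) \<in> ?R\<^sup>*" using z(2) unfolding side_swap_def by simp
  have "(z,y) \<in> ?R\<^sup>*" using rtr_swap[OF s] \<open>(y,z) \<in> ?R\<^sup>*\<close> .
  hence "(x,y) \<in> ?R\<^sup>*" using \<open>(x,z) \<in> ?R\<^sup>*\<close> by (rule rtrancl_trans[rotated])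
  thus False using side_y[OF assms] by (simp add: side_def)
qed

lemma side_conn0:
  assumes "p \<in> side G x y"
  shows "(x,p) \<in> (IE G \<inter> (side G x y \<times> side G x y))\<^sup>*"
proof -
  have "(x,p) \<in> (IE G - {(x, y), (y, x)})\<^sup>*" using assms by (simp add: side_def)
  thus ?thesis
  proof (induction rule: rtrancl_induct)
    case (step w w')
    have "w \<in> side G x y" using step(1) by (simp add: side_def)
    moreover have "w' \<in> side G x y" using step(1,2) by (auto simp: side_def intro: rtrancl_into_rtrancl)
    ultimately show ?case using step by (auto intro: rtrancl_into_rtrancl)
  qed simp
qed

lemma side_conn:
  assumes "stable_tree n G" "p \<in> side G x y" "q \<in> side G x y"
  shows "(p,q) \<in> (IE G \<inter> (side G x y \<times> side G x y))\<^sup>*"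
proof -
  have s: "sym (IE G \<inter> (side G x y \<times> side G x y))"
    using st_facts(4)[OF assms(1)] by (auto simp: sym_def)
  have "(p,x) \<in> (IE G \<inter> (side G x y \<times> side G x y))\<^sup>*" using rtr_swap[OF s side_conn0[OF assms(2)]] .
  thus ?thesis using side_conn0[OF assms(3)] by (rule rtrancl_trans)
qed


lemma side_sub_side:
  assumes st: "stable_tree n G" and e: "(p,q) \<in> IE G" and ab: "a \<notin> side G p q" "b \<notin> side G p q"
    and pab: "p \<in> side G a b"
  shows "side G p q \<subseteq> side G a b"
proof
  fix z assume "z \<in> side G p q"
  hence "(p,z) \<in> (IE G - {(p, q), (q, p)})\<^sup>*" by (simp add: side_def)
  hence "(p,z) \<in> (IE G - {(p,q),(q,p)} - {(a,b),(b,a)})\<^sup>*"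
  proof (induction rule: rtrancl_induct)
    case (step w w')
    have "w \<in> side G p q" using step(1) by (simp add: side_def)
    hence "(w,w') \<notin> {(a,b),(b,a)}" using ab by auto
    thus ?case using step by (auto intro: rtrancl_into_rtrancl)
  qed simp
  thus "z \<in> side G a b" using reach_into[OF pab] by blast
qed

lemma sub_side:
  assumes st: "stable_tree n G" and e: "(x,y) \<in> IE G" and e2: "(x,z) \<in> IE G" and zy: "z \<noteq> y"
  shows "side G z x \<subseteq> side G x y" "x \<notin> side G z x"
proof -
  show xn: "x \<notin> side G z x" using side_y[OF st edge_sym[OF st e2]] .
  have "x \<noteq> y" using edge_neq[OF st e] .
  hence zin: "z \<in> side G x y" using side_closed[OF side_x e2] zy by auto
  show "side G z x \<subseteq> side G x y"
  proof
    fix w assume "w \<in> side G z x"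
    hence "(z,w) \<in> (IE G - {(z, x), (x, z)})\<^sup>*" by (simp add: side_def)
    thus "w \<in> side G x y"
    proof (induction rule: rtrancl_induct)
      case base thus ?case using zin .
    next
      case (step u u')
      have "u \<in> side G z x" "u' \<in> side G z x" using step(1,2) by (auto simp: side_def intro: rtrancl_into_rtrancl)
      hence "u \<noteq> x" "u' \<noteq> x" using xn by auto
      thus ?case using step side_closed[of u G x y u'] by auto
    qed
  qed
qed

lemma Lab_mono: "S \<subseteq> T \<Longrightarrow> Lab n G S \<subseteq> Lab n G T"
  by (auto simp: Lab_def)

lemma Lab_finite: "finite (Lab n G S)"
  by (simp add: Lab_def)

lemma side_finite: "stable_tree n G \<Longrightarrow> (x,y) \<in> IE G \<Longrightarrow> finite (side G x y)"
  using side_sub edgeV st_facts(1) finite_subset by metis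

lemma T2:
  assumes st: "stable_tree n G"
  shows "(x,y) \<in> IE G \<Longrightarrow> 2 \<le> card (Lab n G (side G x y))"
proof (induction "card (side G x y)" arbitrary: x y rule: less_induct)
  case less
  have xV: "x \<in> IV G" using edgeV[OF st less.prems] by auto
  let ?N = "{w. (x,w) \<in> IE G}"
  have deg: "card ?N + card (labels n G x) \<ge> 3" using st_facts(9)[OF st xV] by (simp add: vdeg_def)
  have lab: "labels n G x \<subseteq> Lab n G (side G x y)" using side_x[of x G y] by (auto simp: labels_def Lab_def)
  show ?case
  proof (cases "\<exists>z\<in>?N. z \<noteq> y")
    case True
    then obtain z where z: "(x,z) \<in> IE G" "z \<noteq> y" by auto
    have ss: "side G z x \<subseteq> side G x y" "x \<notin> side G z x" using sub_side[OF st less.prems z] by auto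
    have "side G z x \<subset> side G x y" using ss side_x[of x G y] by auto
    hence "card (side G z x) < card (side G x y)" using side_finite[OF st less.prems] psubset_card_mono by blast
    hence "2 \<le> card (Lab n G (side G z x))" using less.hyps edge_sym[OF st z(1)] by blast
    moreover have "card (Lab n G (side G z x)) \<le> card (Lab n G (side G x y))"
      using Lab_mono[OF ss(1)] Lab_finite card_mono by blast
    ultimately show ?thesis by linarith
  next
    case False
    hence "?N \<subseteq> {y}" by auto
    hence "card ?N \<le> 1" using card_mono[of "{y}" ?N] by simp
    hence "card (labels n G x) \<ge> 2" using deg by linarith
    moreover have "card (labels n G x) \<le> card (Lab n G (side G x y))"
      using lab Lab_finite card_mono by blast
    ultimately show ?thesis by linarith
  qed
qed

lemma Lab_union:
  assumes st: "stable_tree n G" and e: "(x,y) \<in> IE G"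
  shows "Lab n G (side G x y) \<union> Lab n G (side G y x) = {1..n}"
proof -
  have "\<And>i. i \<in> {1..n} \<Longrightarrow> att G i \<in> side G x y \<union> side G y x"
    using side_union[OF st e] st_facts(8)[OF st] by blast
  thus ?thesis unfolding Lab_def by blast
qed


lemma cD:
  assumes "contracts n G G' \<pi>"
  shows "stable_tree n G" "stable_tree n G'" "\<pi> ` IV G = IV G'"
    "\<And>i. i \<in> {1..n} \<Longrightarrow> att G' i = \<pi> (att G i)"
    "\<And>a b. (a,b) \<in> IE G' \<longleftrightarrow> a \<noteq> b \<and> (\<exists>v w. (v,w) \<in> IE G \<and> \<pi> v = a \<and> \<pi> w = b)"
    "\<And>v' x y. v' \<in> IV G' \<Longrightarrow> x \<in> IV G \<Longrightarrow> y \<in> IV G \<Longrightarrow> \<pi> x = v' \<Longrightarrow> \<pi> y = v' \<Longrightarrow>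
        (x, y) \<in> (IE G \<inter> {(a, b). \<pi> a = v' \<and> \<pi> b = v'})\<^sup>*"
proof -
  note a = assms[unfolded contracts_def]
  show "stable_tree n G" using a by (elim conjE)
  show "stable_tree n G'" using a by (elim conjE)
  show "\<pi> ` IV G = IV G'" using a by (elim conjE)
  show "\<And>i. i \<in> {1..n} \<Longrightarrow> att G' i = \<pi> (att G i)" using a by (elim conjE) blast
  show "\<And>a b. (a,b) \<in> IE G' \<longleftrightarrow> a \<noteq> b \<and> (\<exists>v w. (v,w) \<in> IE G \<and> \<pi> v = a \<and> \<pi> w = b)"
    using a by (elim conjE) (rule spec2)
  show "\<And>v' x y. v' \<in> IV G' \<Longrightarrow> x \<in> IV G \<Longrightarrow> y \<in> IV G \<Longrightarrow> \<pi> x = v' \<Longrightarrow> \<pi> y = v' \<Longrightarrow>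
        (x, y) \<in> (IE G \<inter> {(a, b). \<pi> a = v' \<and> \<pi> b = v'})\<^sup>*"
    using a by (elim conjE) blast
qed

lemma contracts_id: assumes st: "stable_tree n G" shows "contracts n G G id"
  unfolding contracts_def
proof (intro conjI allI ballI impI)
  fix v' w' show "((v', w') \<in> IE G) = (v' \<noteq> w' \<and> (\<exists>v w. (v, w) \<in> IE G \<and> id v = v' \<and> id w = w'))"
    using edge_neq[OF st] by auto
qed (use st in auto)

lemma SAT:
  assumes c: "contracts n G G' \<pi>" and e: "(x0,y0) \<in> IE G" and ne: "\<pi> x0 \<noteq> \<pi> y0"
    and p: "p \<in> side G x0 y0" and q: "q \<in> IV G" "\<pi> q = \<pi> p"
  shows "q \<in> side G x0 y0"
proof -
  have st: "stable_tree n G" using cD(1)[OF c] .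
  have pV: "p \<in> IV G" using side_sub[OF st] edgeV[OF st e] p by blast
  have "(p,q) \<in> (IE G \<inter> {(a, b). \<pi> a = \<pi> p \<and> \<pi> b = \<pi> p})\<^sup>*"
    using cD(6)[OF c _ pV q(1)] cD(3)[OF c] pV q(2) by blast
  thus ?thesis
  proof (induction rule: rtrancl_induct)
    case base thus ?case using p .
  next
    case (step w w')
    have "(w,w') \<notin> {(x0,y0),(y0,x0)}" using step(2) ne by auto
    thus ?case using step side_closed[of w G x0 y0 w'] by auto
  qed
qed

lemma PROJ:
  assumes c: "contracts n G G' \<pi>" and path: "(p,q) \<in> (IE G \<inter> (A \<times> A))\<^sup>*"
    and A: "\<And>a. a \<in> A \<Longrightarrow> \<rho> (\<pi> a) = c0"
  shows "(\<pi> p, \<pi> q) \<in> (IE G' \<inter> {(a,b). \<rho> a = c0 \<and> \<rho> b = c0})\<^sup>*"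
  using path
proof (induction rule: rtrancl_induct)
  case (step w w')
  show ?case
  proof (cases "\<pi> w = \<pi> w'")
    case True thus ?thesis using step by simp
  next
    case False
    hence "(\<pi> w, \<pi> w') \<in> IE G'" using cD(5)[OF c] step(2) by blast
    moreover have "\<rho> (\<pi> w) = c0" "\<rho> (\<pi> w') = c0" using A step(2) by auto
    ultimately show ?thesis using step(3) by (auto intro: rtrancl_into_rtrancl)
  qed
qed simp


definition mkH :: "nat set \<Rightarrow> stree \<Rightarrow> stree" where
  "mkH S G = \<lparr>IV = {0,1}, IE = {(0,1),(1,0)}, att = (\<lambda>i. if att G i \<in> S then 0 else 1)\<rparr>"

lemma tg2: "is_tree_graph {0::nat,1} {(0,1),(1,0)}"
proof -
  have c: "\<forall>x\<in>{0::nat,1}. \<forall>y\<in>{0,1}. (x, y) \<in> {(0::nat,1::nat),(1,0)}\<^sup>*" by auto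
  have b: "\<forall>(x, y)\<in>{(0::nat,1::nat),(1,0)}. (x, y) \<notin> ({(0,1),(1,0)} - {(x, y), (y, x)})\<^sup>*" by auto
  show ?thesis unfolding is_tree_graph_def using c b by (auto simp: sym_def irrefl_def)
qed

lemma CONS:
  assumes c: "contracts n G G' \<pi>" and e: "(x0,y0) \<in> IE G" and ne: "\<pi> x0 \<noteq> \<pi> y0"
  defines "S \<equiv> side G x0 y0"
  defines "\<rho> \<equiv> (\<lambda>v'. if v' \<in> \<pi> ` S then 0 else (1::nat))"
  shows "S2 n (mkH S G) \<and> contracts n G' (mkH S G) \<rho> \<and> (\<forall>z\<in>S. \<rho> (\<pi> z) = 0)
     \<and> labels n (mkH S G) 0 = Lab n G S"
proof -
  have st: "stable_tree n G" using cD(1)[OF c] .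
  have st': "stable_tree n G'" using cD(2)[OF c] .
  define T where "T = side G y0 x0"
  have un: "IV G = S \<union> T" unfolding S_def T_def using side_union[OF st e] .
  have dj: "S \<inter> T = {}" unfolding S_def T_def using side_disj[OF st e] .
  have sat: "\<And>z. z \<in> IV G \<Longrightarrow> (\<pi> z \<in> \<pi> ` S \<longleftrightarrow> z \<in> S)"
  proof
    fix z assume z: "z \<in> IV G" "\<pi> z \<in> \<pi> ` S"
    then obtain s where "s \<in> S" "\<pi> z = \<pi> s" by auto
    thus "z \<in> S" using SAT[OF c e ne _ z(1)] unfolding S_def by blast
  qed auto
  have rS: "\<And>z. z \<in> S \<Longrightarrow> \<rho> (\<pi> z) = 0" unfolding \<rho>_def by auto
  have rT: "\<And>z. z \<in> T \<Longrightarrow> \<rho> (\<pi> z) = 1" unfolding \<rho>_def using sat un dj by auto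
  have x0S: "x0 \<in> S" unfolding S_def by (rule side_x)
  have y0T: "y0 \<in> T" unfolding T_def by (rule side_x)
  let ?H = "mkH S G"
  have lab0: "labels n ?H 0 = Lab n G S" by (auto simp: labels_def Lab_def mkH_def)
  have lab1: "labels n ?H 1 = Lab n G T"
    using st_facts(8)[OF st] un dj by (auto simp: labels_def Lab_def mkH_def)
  have T2S: "2 \<le> card (Lab n G S)" unfolding S_def using T2[OF st e] .
  have T2T: "2 \<le> card (Lab n G T)" unfolding T_def using T2[OF st edge_sym[OF st e]] .
  have nb0: "{w. (0, w) \<in> IE ?H} = {1}" by (auto simp: mkH_def)
  have nb1: "{w. (1, w) \<in> IE ?H} = {0}" by (auto simp: mkH_def)
  have stH: "stable_tree n ?H"
    unfolding stable_tree_def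
  proof (intro conjI ballI)
    show "is_tree_graph (IV ?H) (IE ?H)" using tg2 by (simp add: mkH_def)
    fix i show "att ?H i \<in> IV ?H" by (simp add: mkH_def)
  next
    fix v assume "v \<in> IV ?H"
    hence "v = 0 \<or> v = 1" by (simp add: mkH_def)
    thus "3 \<le> vdeg n ?H v" using T2S T2T lab0 lab1 nb0 nb1 by (auto simp: vdeg_def)
  qed
  have S2H: "S2 n ?H" using stH by (simp add: S2_def mkH_def)
  have img: "\<rho> ` IV G' = IV ?H"
  proof
    show "\<rho> ` IV G' \<subseteq> IV ?H" by (auto simp: \<rho>_def mkH_def)
    have "\<pi> x0 \<in> IV G'" "\<pi> y0 \<in> IV G'" using cD(3)[OF c] edgeV[OF st e] by auto
    moreover have "\<rho> (\<pi> x0) = 0" "\<rho> (\<pi> y0) = 1" using rS[OF x0S] rT[OF y0T] .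
    ultimately show "IV ?H \<subseteq> \<rho> ` IV G'" by (auto simp: mkH_def) (metis image_eqI)+
  qed
  have attc: "\<forall>i\<in>{1..n}. att ?H i = \<rho> (att G' i)"
  proof
    fix i assume i: "i \<in> {1..n}"
    have "att G i \<in> IV G" using st_facts(8)[OF st i] .
    thus "att ?H i = \<rho> (att G' i)" using cD(4)[OF c i] rS rT un by (auto simp: mkH_def)
  qed
  have edg: "\<forall>v' w'. (v', w') \<in> IE ?H \<longleftrightarrow> v' \<noteq> w' \<and> (\<exists>v w. (v, w) \<in> IE G' \<and> \<rho> v = v' \<and> \<rho> w = w')"
  proof (intro allI iffI)
    fix a b assume ab: "(a,b) \<in> IE ?H"
    have "(\<pi> x0, \<pi> y0) \<in> IE G'" using cD(5)[OF c] e ne by blast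
    moreover have "(\<pi> y0, \<pi> x0) \<in> IE G'" using cD(5)[OF c] edge_sym[OF st e] ne by fastforce
    moreover have "\<rho> (\<pi> x0) = 0" "\<rho> (\<pi> y0) = 1" using rS[OF x0S] rT[OF y0T] .
    ultimately show "a \<noteq> b \<and> (\<exists>v w. (v, w) \<in> IE G' \<and> \<rho> v = a \<and> \<rho> w = b)"
      using ab by (auto simp: mkH_def)
  next
    fix a b assume "a \<noteq> b \<and> (\<exists>v w. (v, w) \<in> IE G' \<and> \<rho> v = a \<and> \<rho> w = b)"
    then obtain v w where "a \<noteq> b" "\<rho> v = a" "\<rho> w = b" by blast
    moreover have "\<And>u. \<rho> u = 0 \<or> \<rho> u = 1" unfolding \<rho>_def by auto
    ultimately have "(a = 0 \<and> b = 1) \<or> (a = 1 \<and> b = 0)" by metis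
    thus "(a,b) \<in> IE ?H" by (auto simp: mkH_def)
  qed
  have fib: "\<forall>v'\<in>IV ?H. \<forall>x\<in>IV G'. \<forall>y\<in>IV G'. \<rho> x = v' \<longrightarrow> \<rho> y = v' \<longrightarrow>
        (x, y) \<in> (IE G' \<inter> {(a, b). \<rho> a = v' \<and> \<rho> b = v'})\<^sup>*"
  proof (intro ballI impI)
    fix v' x y assume v': "v' \<in> IV ?H" and x: "x \<in> IV G'" and y: "y \<in> IV G'" and rx: "\<rho> x = v'" and ry: "\<rho> y = v'"
    obtain p where p: "p \<in> IV G" "x = \<pi> p" using x cD(3)[OF c] by auto
    obtain q where q: "q \<in> IV G" "y = \<pi> q" using y cD(3)[OF c] by auto
    show "(x, y) \<in> (IE G' \<inter> {(a, b). \<rho> a = v' \<and> \<rho> b = v'})\<^sup>*"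
    proof (cases "p \<in> S")
      case True
      hence "v' = 0" using rS rx p by auto
      have "q \<in> S" using ry p q rS rT un \<open>v' = 0\<close> by force
      have "(p,q) \<in> (IE G \<inter> (S \<times> S))\<^sup>*" unfolding S_def
        using side_conn[OF st] True \<open>q \<in> S\<close> unfolding S_def by blast
      from PROJ[OF c this, of \<rho> 0] show ?thesis using rS p q \<open>v' = 0\<close> by blast
    next
      case False
      hence pT: "p \<in> T" using un p by auto
      hence "v' = 1" using rT rx p by auto
      have "q \<in> T" using ry p q rS rT un \<open>v' = 1\<close> by force
      have "(p,q) \<in> (IE G \<inter> (T \<times> T))\<^sup>*" unfolding T_def
        using side_conn[OF st] pT \<open>q \<in> T\<close> unfolding T_def by blast
      from PROJ[OF c this, of \<rho> 1] show ?thesis using rT p q \<open>v' = 1\<close> by blast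
    qed
  qed
  have "contracts n G' ?H \<rho>" unfolding contracts_def using st' stH img attc edg fib by blast
  thus ?thesis using S2H rS lab0 by blast
qed


lemma edge_to_Z:
  assumes st: "stable_tree n G" and e: "(x,y) \<in> IE G" and L: "Lab n G (side G x y) \<in> C"
    and v: "v \<in> side G x y"
  shows "v \<in> Z_of n C G"
proof -
  have c: "contracts n G G id" using contracts_id[OF st] .
  have ne: "id x \<noteq> id y" using edge_neq[OF st e] by simp
  define \<rho> where "\<rho> = (\<lambda>v'. if v' \<in> id ` (side G x y) then 0 else (1::nat))"
  have *: "S2 n (mkH (side G x y) G) \<and> contracts n G (mkH (side G x y) G) \<rho> \<and> (\<forall>z\<in>side G x y. \<rho> (id z) = 0)
     \<and> labels n (mkH (side G x y) G) 0 = Lab n G (side G x y)"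
    using CONS[OF c e ne] unfolding \<rho>_def by blast
  have "v \<in> IV G" using side_sub[OF st] edgeV[OF st e] v by blast
  moreover have "(0::nat) \<in> IV (mkH (side G x y) G)" by (simp add: mkH_def)
  ultimately show ?thesis unfolding Z_of_def using * L v by fastforce
qed

lemma Z_to_edge:
  assumes v: "v \<in> Z_of n C G"
  shows "\<exists>x y. (x,y) \<in> IE G \<and> Lab n G (side G x y) \<in> C \<and> v \<in> side G x y"
proof -
  obtain H \<psi> w where H: "S2 n H" "w \<in> IV H" "labels n H w \<in> C" "contracts n G H \<psi>" "\<psi> v = w"
    and vV: "v \<in> IV G"
    using v unfolding Z_of_def by blast
  have st: "stable_tree n G" using cD(1)[OF H(4)] .
  have stH: "stable_tree n H" using cD(2)[OF H(4)] .
  have "card (IV H) = 2" using H(1) by (simp add: S2_def)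
  then obtain a b where ab: "IV H = {a,b}" "a \<noteq> b" by (auto simp: card_2_iff)
  obtain w2 where w2: "IV H = {w,w2}" "w \<noteq> w2" using ab H(2) by (metis insertE insert_commute singletonD)
  have "(w,w2) \<in> (IE H)\<^sup>*" using st_facts(6)[OF stH] w2 by auto
  then obtain w3 where w3: "(w,w3) \<in> IE H" using w2(2) by (metis converse_rtranclE)
  have "w3 \<in> IV H" "w3 \<noteq> w" using edgeV[OF stH w3] edge_neq[OF stH w3] by auto
  hence "w3 = w2" using w2 by auto
  then obtain p q where pq: "(p,q) \<in> IE G" "\<psi> p = w" "\<psi> q = w2"
    using cD(5)[OF H(4)] w3 by blast
  have ne: "\<psi> p \<noteq> \<psi> q" using pq w2 by simp
  have eq: "\<And>z. z \<in> IV G \<Longrightarrow> (\<psi> z = w \<longleftrightarrow> z \<in> side G p q)"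
  proof
    fix z assume z: "z \<in> IV G" "\<psi> z = w"
    thus "z \<in> side G p q" using SAT[OF H(4) pq(1) ne side_x[of p G q] z(1)] pq by simp
  next
    fix z assume z: "z \<in> IV G" "z \<in> side G p q"
    have "\<psi> z \<in> IV H" using z cD(3)[OF H(4)] by blast
    moreover have "\<psi> z \<noteq> w2"
    proof
      assume "\<psi> z = w2"
      hence "z \<in> side G q p" using SAT[OF H(4) edge_sym[OF st pq(1)] _ side_x[of q G p] z(1)] pq ne by simp
      thus False using z(2) side_disj[OF st pq(1)] by auto
    qed
    ultimately show "\<psi> z = w" using w2 by auto
  qed
  have "labels n H w = Lab n G (side G p q)"
  proof -
    have "\<And>i. i \<in> {1..n} \<Longrightarrow> (att H i = w \<longleftrightarrow> att G i \<in> side G p q)"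
      using cD(4)[OF H(4)] eq st_facts(8)[OF st] by simp
    thus ?thesis unfolding labels_def Lab_def by blast
  qed
  thus ?thesis using pq(1) H(3) eq[OF vV] H(5) by auto
qed


lemma fibre_mono:
  assumes c: "contracts n G G' \<pi>" and x: "x \<in> IV G" and z: "z \<in> IV G" "\<pi> z = \<pi> x"
    and h: "\<psi> (\<pi> x) = h"
  shows "(x,z) \<in> (IE G \<inter> {(a,b). \<psi> (\<pi> a) = h \<and> \<psi> (\<pi> b) = h})\<^sup>*"
proof -
  have "(x,z) \<in> (IE G \<inter> {(a,b). \<pi> a = \<pi> x \<and> \<pi> b = \<pi> x})\<^sup>*"
    using cD(6)[OF c _ x z(1) refl z(2)] cD(3)[OF c] x by blast
  moreover have "IE G \<inter> {(a,b). \<pi> a = \<pi> x \<and> \<pi> b = \<pi> x} \<subseteq> IE G \<inter> {(a,b). \<psi> (\<pi> a) = h \<and> \<psi> (\<pi> b) = h}"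
    using h by auto
  ultimately show ?thesis using rtrancl_mono by blast
qed

lemma COMP:
  assumes c: "contracts n G G' \<pi>" and d: "contracts n G' H \<psi>"
  shows "contracts n G H (\<psi> \<circ> \<pi>)"
proof -
  have st: "stable_tree n G" using cD(1)[OF c] .
  have st': "stable_tree n G'" using cD(1)[OF d] .
  have img: "(\<psi> \<circ> \<pi>) ` IV G = IV H" using cD(3)[OF c] cD(3)[OF d] by (metis image_comp)
  have attc: "\<forall>i\<in>{1..n}. att H i = (\<psi> \<circ> \<pi>) (att G i)" using cD(4)[OF c] cD(4)[OF d] by simp
  have edg: "\<forall>a b. (a, b) \<in> IE H \<longleftrightarrow> a \<noteq> b \<and> (\<exists>v w. (v, w) \<in> IE G \<and> (\<psi> \<circ> \<pi>) v = a \<and> (\<psi> \<circ> \<pi>) w = b)"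
  proof (intro allI iffI)
    fix a b assume "(a,b) \<in> IE H"
    then obtain v' w' where vw: "a \<noteq> b" "(v',w') \<in> IE G'" "\<psi> v' = a" "\<psi> w' = b" using cD(5)[OF d] by blast
    then obtain v w where "(v,w) \<in> IE G" "\<pi> v = v'" "\<pi> w = w'" using cD(5)[OF c] by blast
    thus "a \<noteq> b \<and> (\<exists>v w. (v, w) \<in> IE G \<and> (\<psi> \<circ> \<pi>) v = a \<and> (\<psi> \<circ> \<pi>) w = b)" using vw by auto
  next
    fix a b assume "a \<noteq> b \<and> (\<exists>v w. (v, w) \<in> IE G \<and> (\<psi> \<circ> \<pi>) v = a \<and> (\<psi> \<circ> \<pi>) w = b)"
    then obtain v w where vw: "a \<noteq> b" "(v, w) \<in> IE G" "\<psi> (\<pi> v) = a" "\<psi> (\<pi> w) = b" by auto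
    hence "\<pi> v \<noteq> \<pi> w" by auto
    hence "(\<pi> v, \<pi> w) \<in> IE G'" using cD(5)[OF c] vw(2) by blast
    thus "(a,b) \<in> IE H" using cD(5)[OF d] vw by blast
  qed
  have fib: "\<forall>h\<in>IV H. \<forall>x\<in>IV G. \<forall>y\<in>IV G. (\<psi> \<circ> \<pi>) x = h \<longrightarrow> (\<psi> \<circ> \<pi>) y = h \<longrightarrow>
        (x, y) \<in> (IE G \<inter> {(a, b). (\<psi> \<circ> \<pi>) a = h \<and> (\<psi> \<circ> \<pi>) b = h})\<^sup>*"
  proof (intro ballI impI)
    fix h x y assume h: "h \<in> IV H" and x: "x \<in> IV G" and y: "y \<in> IV G" and hx: "(\<psi> \<circ> \<pi>) x = h" and hy: "(\<psi> \<circ> \<pi>) y = h"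
    let ?R = "IE G \<inter> {(a, b). \<psi> (\<pi> a) = h \<and> \<psi> (\<pi> b) = h}"
    have pxV: "\<pi> x \<in> IV G'" "\<pi> y \<in> IV G'" using x y cD(3)[OF c] by auto
    have "(\<pi> x, \<pi> y) \<in> (IE G' \<inter> {(a, b). \<psi> a = h \<and> \<psi> b = h})\<^sup>*"
      using cD(6)[OF d h pxV] hx hy by simp
    hence "\<forall>z. z \<in> IV G \<longrightarrow> \<pi> z = \<pi> y \<longrightarrow> (x,z) \<in> ?R\<^sup>*"
    proof (induction rule: rtrancl_induct)
      case base
      show ?case using fibre_mono[OF c x, of _ \<psi> h] hx by simp
    next
      case (step u' y')
      show ?case
      proof (intro allI impI)
        fix z assume z: "z \<in> IV G" "\<pi> z = y'"
        have "(u',y') \<in> IE G'" "\<psi> u' = h" "\<psi> y' = h" using step(2) by auto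
        then obtain p q where pq: "(p,q) \<in> IE G" "\<pi> p = u'" "\<pi> q = y'" using cD(5)[OF c] by blast
        have pV: "p \<in> IV G" "q \<in> IV G" using edgeV[OF st pq(1)] by auto
        have 1: "(x,p) \<in> ?R\<^sup>*" using step(3) pV pq by blast
        have 2: "(p,q) \<in> ?R" using pq \<open>\<psi> u' = h\<close> \<open>\<psi> y' = h\<close> by auto
        have 3: "(q,z) \<in> ?R\<^sup>*" using fibre_mono[OF c pV(2) z(1), of \<psi> h] z pq \<open>\<psi> y' = h\<close> by simp
        show "(x,z) \<in> ?R\<^sup>*" using rtrancl_trans[OF rtrancl_into_rtrancl[OF 1 2] 3] .
      qed
    qed
    thus "(x, y) \<in> (IE G \<inter> {(a, b). (\<psi> \<circ> \<pi>) a = h \<and> (\<psi> \<circ> \<pi>) b = h})\<^sup>*" using y by simp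
  qed
  show ?thesis unfolding contracts_def using st cD(2)[OF d] img attc edg fib by blast
qed


lemma fstep:
  assumes "(a,f) \<in> R\<^sup>*" "f \<noteq> a"
  shows "\<exists>z. (a,z) \<in> R \<and> (z,f) \<in> (R \<inter> {(u,w). u \<noteq> a \<and> w \<noteq> a})\<^sup>*"
  using assms
proof (induction rule: rtrancl_induct)
  case (step w f)
  show ?case
  proof (cases "w = a")
    case True thus ?thesis using step by auto
  next
    case False
    then obtain z where "(a,z) \<in> R" "(z,w) \<in> (R \<inter> {(u,w). u \<noteq> a \<and> w \<noteq> a})\<^sup>*" using step by blast
    moreover have "(w,f) \<in> R \<inter> {(u,w). u \<noteq> a \<and> w \<noteq> a}" using step False by auto
    ultimately show ?thesis by (meson rtrancl_into_rtrancl)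
  qed
qed simp

lemma cross:
  assumes "(g,f) \<in> R\<^sup>*" "g \<in> S" "f \<notin> S"
  shows "\<exists>a b. (a,b) \<in> R \<and> a \<in> S \<and> b \<notin> S"
  using assms
proof (induction rule: rtrancl_induct)
  case (step w f)
  thus ?case by (cases "w \<in> S") auto
qed simp

lemma ci_facts:
  assumes "contraction_indicator n C"
  shows "\<And>B1 B2. B1 \<in> C \<Longrightarrow> B2 \<in> C \<Longrightarrow> B1 \<union> B2 \<noteq> {1..n}"
    "\<And>B B'. B \<in> C \<Longrightarrow> B' \<subseteq> B \<Longrightarrow> 2 \<le> card B' \<Longrightarrow> B' \<in> C"
  using assms unfolding contraction_indicator_def by blast+

lemma Lab_sub: "Lab n G S \<subseteq> {1..n}" by (auto simp: Lab_def)

lemma BACK: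
  assumes ci: "contraction_indicator n C" and c: "contracts n G G' \<pi>" and v': "v' \<in> IV G'"
    and all: "\<forall>v\<in>IV G. \<pi> v = v' \<longrightarrow> v \<in> Z_of n C G"
  shows "v' \<in> Z_of n C G'"
proof -
  have st: "stable_tree n G" using cD(1)[OF c] .
  define F where "F = {z \<in> IV G. \<pi> z = v'}"
  have "v' \<in> \<pi> ` IV G" using v' cD(3)[OF c] by simp
  then obtain f0 where "f0 \<in> IV G" "\<pi> f0 = v'" by (auto simp del: image_iff elim!: imageE)
  hence f0: "f0 \<in> F" unfolding F_def by simp
  have FV: "F \<subseteq> IV G" unfolding F_def by auto
  have Fconn: "\<And>p q. p \<in> F \<Longrightarrow> q \<in> F \<Longrightarrow> (p,q) \<in> (IE G \<inter> (F \<times> F))\<^sup>*"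
  proof -
    fix p q assume pq: "p \<in> F" "q \<in> F"
    have "(p,q) \<in> (IE G \<inter> {(a, b). \<pi> a = v' \<and> \<pi> b = v'})\<^sup>*"
      using cD(6)[OF c v'] pq unfolding F_def by blast
    moreover have "IE G \<inter> {(a, b). \<pi> a = v' \<and> \<pi> b = v'} \<subseteq> IE G \<inter> (F \<times> F)"
      using edgeV[OF st] unfolding F_def by auto
    ultimately show "(p,q) \<in> (IE G \<inter> (F \<times> F))\<^sup>*" using rtrancl_mono by blast
  qed
  have FZ: "\<And>f. f \<in> F \<Longrightarrow> \<exists>x y. (x,y) \<in> IE G \<and> Lab n G (side G x y) \<in> C \<and> f \<in> side G x y"
    using all Z_to_edge unfolding F_def by blast
  have finE: "finite (IE G)" using st_facts(1,3)[OF st] finite_subset by blast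
  define cs where "cs = (\<lambda>p. card (side G (fst p) (snd p)))"
  define CE where "CE = {(x,y). (x,y) \<in> IE G \<and> Lab n G (side G x y) \<in> C \<and> side G x y \<inter> F \<noteq> {}}"
  have finCE: "finite CE" using finE unfolding CE_def by (rule rev_finite_subset) auto
  have neCE: "CE \<noteq> {}" using FZ[OF f0] f0 unfolding CE_def by blast
  obtain x y where xyCE: "(x,y) \<in> CE" and xymax: "\<And>q. q \<in> CE \<Longrightarrow> cs q \<le> cs (x,y)"
  proof -
    have "Max (cs ` CE) \<in> cs ` CE" using finCE neCE by simp
    then obtain p where "p \<in> CE" "cs p = Max (cs ` CE)" by auto
    moreover have "\<And>q. q \<in> CE \<Longrightarrow> cs q \<le> Max (cs ` CE)" using finCE by simp
    ultimately show ?thesis using that[of "fst p" "snd p"] by auto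
  qed
  have e: "(x,y) \<in> IE G" and LC: "Lab n G (side G x y) \<in> C" and meet: "side G x y \<inter> F \<noteq> {}"
    using xyCE unfolding CE_def by auto
  have Fsub: "F \<subseteq> side G x y"
  proof (rule ccontr)
    assume "\<not> F \<subseteq> side G x y"
    then obtain f' where f': "f' \<in> F" "f' \<notin> side G x y" by auto
    obtain g where g: "g \<in> F" "g \<in> side G x y" using meet by auto
    obtain a b where ab: "(a,b) \<in> IE G \<inter> (F \<times> F)" "a \<in> side G x y" "b \<notin> side G x y"
      using cross[OF Fconn[OF g(1) f'(1)] g(2) f'(2)] by blast
    have "(a,b) \<in> {(x,y),(y,x)}" using side_closed[OF ab(2), of b] ab by auto
    moreover have "a \<noteq> y" using ab(2) side_y[OF st e] by auto
    ultimately have "b = y" by auto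
    hence yF: "y \<in> F" using ab(1) by auto
    obtain a b where ab: "(a,b) \<in> IE G" "Lab n G (side G a b) \<in> C" "y \<in> side G a b"
      using FZ[OF yF] by blast
    have un: "Lab n G (side G x y) \<union> Lab n G (side G y x) = {1..n}" using Lab_union[OF st e] .
    show False
    proof (cases "(a,b) \<in> {(x,y),(y,x)}")
      case True
      moreover have "(a,b) \<noteq> (x,y)" using ab(3) side_y[OF st e] by auto
      ultimately have "(a,b) = (y,x)" by auto
      thus False using ci_facts(1)[OF ci LC] ab(2) un by auto
    next
      case False
      have aV: "a \<in> IV G" using edgeV[OF st ab(1)] by auto
      have dj: "side G x y \<inter> side G y x = {}" using side_disj[OF st e] .
      show False
      proof (cases "a \<in> side G x y")
        case True
        hence bin: "b \<in> side G x y" using side_closed[OF True ab(1)] False by auto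
        have "a \<notin> side G y x" "b \<notin> side G y x" using True bin dj by auto
        hence "side G y x \<subseteq> side G a b" using side_sub_side[OF st edge_sym[OF st e] _ _ ab(3)] by blast
        hence "Lab n G (side G a b) \<union> Lab n G (side G x y) = {1..n}"
          using Lab_mono[of "side G y x" "side G a b" n G] un Lab_sub by blast
        thus False using ci_facts(1)[OF ci ab(2) LC] by simp
      next
        case ayx: False
        hence ayx: "a \<in> side G y x" using aV side_union[OF st e] by auto
        have "(a,b) \<notin> {(y,x),(x,y)}" using False by auto
        hence bin: "b \<in> side G y x" using side_closed[OF ayx ab(1)] by auto
        have nab: "a \<notin> side G x y" "b \<notin> side G x y" using ayx bin dj by auto
        have "(y,x) \<notin> {(a,b),(b,a)}" using False by auto
        hence "x \<in> side G a b" using side_closed[OF ab(3) edge_sym[OF st e]] by auto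
        hence sub: "side G x y \<subseteq> side G a b" using side_sub_side[OF st e nab] by blast
        have "y \<notin> side G x y" using side_y[OF st e] .
        hence "side G x y \<subset> side G a b" using sub ab(3) by auto
        hence "cs (x,y) < cs (a,b)" unfolding cs_def using side_finite[OF st ab(1)] psubset_card_mono by auto
        moreover have "(a,b) \<in> CE" unfolding CE_def using ab yF by auto
        ultimately show False using xymax by fastforce
      qed
    qed
  qed
  define CF where "CF = {(x,y). (x,y) \<in> IE G \<and> Lab n G (side G x y) \<in> C \<and> F \<subseteq> side G x y}"
  have finCF: "finite CF" using finE unfolding CF_def by (rule rev_finite_subset) auto
  have neCF: "CF \<noteq> {}" using e LC Fsub unfolding CF_def by blast
  obtain x0 y0 where CF0: "(x0,y0) \<in> CF" and xymin: "\<And>q. q \<in> CF \<Longrightarrow> cs (x0,y0) \<le> cs q"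
  proof -
    have "Min (cs ` CF) \<in> cs ` CF" using finCF neCF by simp
    then obtain p where "p \<in> CF" "cs p = Min (cs ` CF)" by auto
    moreover have "\<And>q. q \<in> CF \<Longrightarrow> Min (cs ` CF) \<le> cs q" using finCF by simp
    ultimately show ?thesis using that[of "fst p" "snd p"] by auto
  qed
  have e0: "(x0,y0) \<in> IE G" and LC0: "Lab n G (side G x0 y0) \<in> C" and Fsub0: "F \<subseteq> side G x0 y0"
    using CF0 unfolding CF_def by auto
  have ne: "\<pi> x0 \<noteq> \<pi> y0"
  proof
    assume eq: "\<pi> x0 = \<pi> y0"
    have x0F: "x0 \<notin> F"
    proof
      assume "x0 \<in> F"
      hence "y0 \<in> F" using eq edgeV[OF st e0] unfolding F_def by auto
      thus False using Fsub0 side_y[OF st e0] by auto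
    qed
    have f0s: "(x0,f0) \<in> (IE G - {(x0,y0),(y0,x0)})\<^sup>*" using f0 Fsub0 by (auto simp: side_def)
    have "f0 \<noteq> x0" using f0 x0F by auto
    then obtain z where z: "(x0,z) \<in> IE G - {(x0,y0),(y0,x0)}"
      and zf: "(z,f0) \<in> ((IE G - {(x0,y0),(y0,x0)}) \<inter> {(u,w). u \<noteq> x0 \<and> w \<noteq> x0})\<^sup>*"
      using fstep[OF f0s] by blast
    have ez: "(x0,z) \<in> IE G" "z \<noteq> y0" using z by auto
    have "f0 \<in> side G z x0" using reach_into[OF side_x zf] by blast
    hence Fz: "F \<subseteq> side G z x0"
    proof -
      assume f0z: "f0 \<in> side G z x0"
      show ?thesis
      proof
        fix f' assume "f' \<in> F"
        have "IE G \<inter> (F \<times> F) \<subseteq> IE G - {(z,x0),(x0,z)}" using x0F by auto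
        thus "f' \<in> side G z x0" using reach_into[OF f0z Fconn[OF f0 \<open>f' \<in> F\<close>]] by blast
      qed
    qed
    have ss: "side G z x0 \<subseteq> side G x0 y0" "x0 \<notin> side G z x0" using sub_side[OF st e0 ez] by auto
    have "side G z x0 \<subset> side G x0 y0" using ss side_x[of x0 G y0] by auto
    hence lt: "cs (z,x0) < cs (x0,y0)" unfolding cs_def using side_finite[OF st e0] psubset_card_mono by auto
    have "2 \<le> card (Lab n G (side G z x0))" using T2[OF st edge_sym[OF st ez(1)]] .
    hence "Lab n G (side G z x0) \<in> C" using ci_facts(2)[OF ci LC0 Lab_mono[OF ss(1)]] by blast
    hence "(z,x0) \<in> CF" unfolding CF_def using edge_sym[OF st ez(1)] Fz by auto
    thus False using xymin lt by fastforce
  qed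
  define \<rho> where "\<rho> = (\<lambda>v'. if v' \<in> \<pi> ` (side G x0 y0) then 0 else (1::nat))"
  have *: "S2 n (mkH (side G x0 y0) G) \<and> contracts n G' (mkH (side G x0 y0) G) \<rho> \<and> (\<forall>z\<in>side G x0 y0. \<rho> (\<pi> z) = 0)
     \<and> labels n (mkH (side G x0 y0) G) 0 = Lab n G (side G x0 y0)"
    using CONS[OF c e0 ne] unfolding \<rho>_def by blast
  have "\<pi> f0 = v'" using f0 unfolding F_def by auto
  moreover have "f0 \<in> side G x0 y0" using f0 Fsub0 by auto
  moreover have "(0::nat) \<in> IV (mkH (side G x0 y0) G)" by (simp add: mkH_def)
  ultimately show ?thesis unfolding Z_of_def using * LC0 v' by fastforce
qed


definition G1 :: stree where "G1 = \<lparr>IV = {0}, IE = {}, att = (\<lambda>i. 0)\<rparr>"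

lemma G1_stable: assumes "3 \<le> n" shows "stable_tree n G1"
proof -
  have tg: "is_tree_graph {0::nat} {}" unfolding is_tree_graph_def by (auto simp: sym_def irrefl_def)
  have "labels n G1 0 = {1..n}" by (auto simp: labels_def G1_def)
  hence "vdeg n G1 0 = n" by (simp add: vdeg_def G1_def)
  thus ?thesis unfolding stable_tree_def using tg assms by (simp add: G1_def)
qed

lemma G1_contr: assumes "3 \<le> n" "stable_tree n G" shows "contracts n G G1 (\<lambda>_. 0)"
  unfolding contracts_def
proof (intro conjI allI ballI impI)
  show "stable_tree n G" by fact
  show "stable_tree n G1" using G1_stable[OF assms(1)] .
  show "(\<lambda>_. 0) ` IV G = IV G1" using st_facts(2)[OF assms(2)] by (auto simp: G1_def)
  fix v' w' show "((v', w') \<in> IE G1) = (v' \<noteq> w' \<and> (\<exists>v w. (v, w) \<in> IE G \<and> (0::nat) = v' \<and> (0::nat) = w'))"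
    by (auto simp: G1_def)
next
  fix i show "att G1 i = 0" by (simp add: G1_def)
next
  fix v' x y assume "x \<in> IV G" "y \<in> IV G" "(0::nat) = v'"
  thus "(x, y) \<in> (IE G \<inter> {(a, b). (0::nat) = v' \<and> (0::nat) = v'})\<^sup>*"
    using st_facts(6)[OF assms(2)] by simp
qed

lemma G1_noZ: "v \<notin> Z_of n C G1"
proof
  assume "v \<in> Z_of n C G1"
  then obtain H \<rho> where "S2 n H" "contracts n G1 H \<rho>" unfolding Z_of_def by blast
  hence "card (IV H) = 2" "\<rho> ` IV G1 = IV H" using cD(3) by (auto simp: S2_def)
  hence "card (\<rho> ` IV G1) = 2" by simp
  thus False by (simp add: G1_def)
qed

theorem proposition7p7:
  fixes n :: nat and C :: "nat set set"
  assumes "3 \<le> n"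
    and "contraction_indicator n C"
  shows "extremal_assignment n (Z_of n C) \<and> smooth n (Z_of n C)"
proof -
  have fwd: "\<And>G G' \<pi> v' v. contracts n G G' \<pi> \<Longrightarrow> v' \<in> Z_of n C G' \<Longrightarrow> v \<in> IV G \<Longrightarrow> \<pi> v = v' \<Longrightarrow> v \<in> Z_of n C G"
  proof -
    fix G G' \<pi> v' v assume c: "contracts n G G' \<pi>" and z: "v' \<in> Z_of n C G'" and v: "v \<in> IV G" "\<pi> v = v'"
    then obtain H \<psi> w where H: "S2 n H" "w \<in> IV H" "labels n H w \<in> C" "contracts n G' H \<psi>" "\<psi> v' = w"
      unfolding Z_of_def by blast
    have "contracts n G H (\<psi> \<circ> \<pi>)" using COMP[OF c H(4)] .
    thus "v \<in> Z_of n C G" unfolding Z_of_def using H v by fastforce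
  qed
  have ext1: "\<And>G. stable_tree n G \<Longrightarrow> Z_of n C G \<subseteq> IV G \<and> Z_of n C G \<noteq> IV G"
  proof
    fix G assume st: "stable_tree n G"
    show "Z_of n C G \<subseteq> IV G" unfolding Z_of_def by auto
    show "Z_of n C G \<noteq> IV G"
    proof
      assume eq: "Z_of n C G = IV G"
      have "(0::nat) \<in> Z_of n C G1"
        using BACK[OF assms(2) G1_contr[OF assms(1) st]] eq by (simp add: G1_def)
      thus False using G1_noZ by blast
    qed
  qed
  have ext: "extremal_assignment n (Z_of n C)"
    unfolding extremal_assignment_def
  proof (intro conjI allI impI ballI)
    fix G assume "stable_tree n G" thus "Z_of n C G \<subseteq> IV G" "Z_of n C G \<noteq> IV G" using ext1 by auto
  next
    fix G G' \<pi> v' assume c: "contracts n G G' \<pi>" and v': "v' \<in> IV G'"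
    show "(v' \<in> Z_of n C G') = (\<forall>v\<in>IV G. \<pi> v = v' \<longrightarrow> v \<in> Z_of n C G)"
      using fwd[OF c] BACK[OF assms(2) c v'] by blast
  qed
  have sm: "smooth n (Z_of n C)"
    unfolding smooth_def
  proof (intro allI impI ballI)
    fix G v assume st: "stable_tree n G" and v: "v \<in> Z_of n C G"
    then obtain H \<psi> w where H: "S2 n H" "w \<in> IV H" "labels n H w \<in> C" "contracts n G H \<psi>" "\<psi> v = w"
      unfolding Z_of_def by blast
    have stH: "stable_tree n H" using H(1) by (simp add: S2_def)
    have "w \<in> Z_of n C H" unfolding Z_of_def using H contracts_id[OF stH] by fastforce
    thus "\<exists>G' \<pi>. S2 n G' \<and> contracts n G G' \<pi> \<and> \<pi> v \<in> Z_of n C G'" using H by blast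
  qed
  show ?thesis using ext sm by blast
qed

end
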